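(* Assume $\nabla f$ is $L$-Lipschitz, and consider the SAM flow at a point $(\mathcal G_1,\ldots,\mathcal G_K)$ where not all $g_k$ vanish. Then for all $i,j\in[K]$ with $i\ne j$, $$\frac{d}{dt}\big(\|\mathcal G_i\|_F^2-\|\mathcal G_j\|_F^2\big)=2\rho u\big(\|g_i\|_F^2-\|g_j\|_F^2\big)+R_{ij},$$ where there is a constant $C$ depending only on $\Phi$, $K$, $L$, the Frobenius norms of the current cores and $\|\nabla f(\mathcal T)\|_F$ (with $\mathcal T=\Phi(\mathcal G_1,\ldots,\mathcal G_K)$) such that $|R_{ij}|\le C\rho^2$ for all $\rho\in(0,1]$. (The paper writes the remainder as $O(\rho^2L)$.)
   Context: Let $K\ge 2$. For each $k\in[K]$ let $V_k$ be a finite-dimensional real space of tensors with Frobenius inner product $\langle\cdot,\cdot\rangle_F$ and norm $\|\cdot\|_F$; $[K]=\{1,\ldots,K\}$. Let $\Phi:V_1\times\cdots\times V_K\to\mathbb R^{n_1\times\cdots\times n_d}$ be multilinear, $f:\mathbb R^{n_1\times\cdots\times n_d}\to\mathbb R$ continuously differentiable with $\|\nabla f(\mathcal X)-\nabla f(\mathcal Y)\|_F\le L\|\mathcal X-\mathcal Y\|_F$ for all $\mathcal X,\mathcal Y$, and $F:=f\circ\Phi$. SAM gradient flow with radius $\rho>0$: at a point $(\mathcal G_1,\ldots,\mathcal G_K)$ let $g_k=\nabla_{\mathcal G_k}F(\mathcal G_1,\ldots,\mathcal G_K)$, $u=(\sum_{j=1}^K\|g_j\|_F^2)^{-1/2}$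 (requiring not all $g_j=0$), $\tilde{\mathcal G}_k=\mathcal G_k+\rho u g_k$, $\tilde g_k=\nabla_{\mathcal G_k}F(\tilde{\mathcal G}_1,\ldots,\tilde{\mathcal G}_K)$; the SAM flow is $\frac{d}{dt}\mathcal G_k=-\tilde g_k$ for all $k\in[K]$, and time derivatives above are along this flow at the given point. *)

theory Defs
  imports "HOL-Analysis.Analysis"
begin

text \<open>Cores (G_1,...,G_K) are modelled as functions nat => 'v, where each core space V_k
  is a (finite-dimensional) subspace of a common Euclidean space 'v (inner product = Frobenius
  inner product).\<close>

definition cores :: "nat \<Rightarrow> (nat \<Rightarrow> 'v::real_vector set) \<Rightarrow> (nat \<Rightarrow> 'v) set" where
  "cores K V = {G. (\<forall>k\<in>{1..K}. G k \<in> V k) \<and> (\<forall>k. k \<notin> {1..K} \<longrightarrow> G k = 0)}"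

definition multilinear_on ::
  "nat \<Rightarrow> (nat \<Rightarrow> 'v::real_vector set) \<Rightarrow> ((nat \<Rightarrow> 'v) \<Rightarrow> 'w::real_vector) \<Rightarrow> bool" where
  "multilinear_on K V \<Phi> \<longleftrightarrow>
     (\<forall>G\<in>cores K V. \<forall>k\<in>{1..K}. \<forall>x\<in>V k. \<forall>y\<in>V k. \<forall>c::real.
        \<Phi> (G(k := x + y)) = \<Phi> (G(k := x)) + \<Phi> (G(k := y)) \<and>
        \<Phi> (G(k := c *\<^sub>R x)) = c *\<^sub>R \<Phi> (G(k := x)))"

definition pgrad ::
  "((nat \<Rightarrow> 'v::real_inner) \<Rightarrow> real) \<Rightarrow> (nat \<Rightarrow> 'v set) \<Rightarrow> (nat \<Rightarrow> 'v) \<Rightarrow> nat \<Rightarrow> 'v" where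
  "pgrad F V G k = (THE g. g \<in> V k \<and>
       ((\<lambda>h. F (G(k := G k + h))) has_derivative (\<lambda>h. g \<bullet> h)) (at 0 within V k))"

definition sam_grads ::
  "((nat \<Rightarrow> 'v::real_inner) \<Rightarrow> real) \<Rightarrow> (nat \<Rightarrow> 'v set) \<Rightarrow> nat \<Rightarrow> (nat \<Rightarrow> 'v) \<Rightarrow> nat \<Rightarrow> 'v" where
  "sam_grads F V K G = (\<lambda>k. if k \<in> {1..K} then pgrad F V G k else 0)"

definition sam_u ::
  "((nat \<Rightarrow> 'v::real_inner) \<Rightarrow> real) \<Rightarrow> (nat \<Rightarrow> 'v set) \<Rightarrow> nat \<Rightarrow> (nat \<Rightarrow> 'v) \<Rightarrow> real" where
  "sam_u F V K G = 1 / sqrt (\<Sum>j=1..K. (norm (sam_grads F V K G j))\<^sup>2)"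

definition sam_perturb ::
  "((nat \<Rightarrow> 'v::real_inner) \<Rightarrow> real) \<Rightarrow> (nat \<Rightarrow> 'v set) \<Rightarrow> nat \<Rightarrow> real \<Rightarrow> (nat \<Rightarrow> 'v) \<Rightarrow> nat \<Rightarrow> 'v" where
  "sam_perturb F V K \<rho> G = (\<lambda>k. G k + (\<rho> * sam_u F V K G) *\<^sub>R sam_grads F V K G k)"

text \<open>SAM gradients g~_k = grad_{G_k} F(G~); the SAM flow is dG_k/dt = - g~_k.\<close>
definition sam_tgrads ::
  "((nat \<Rightarrow> 'v::real_inner) \<Rightarrow> real) \<Rightarrow> (nat \<Rightarrow> 'v set) \<Rightarrow> nat \<Rightarrow> real \<Rightarrow> (nat \<Rightarrow> 'v) \<Rightarrow> nat \<Rightarrow> 'v" where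
  "sam_tgrads F V K \<rho> G = sam_grads F V K (sam_perturb F V K \<rho> G)"

end

theory Submission
  imports Defs "HOL-Library.FuncSet"
begin

lemma basis_exists:
  fixes S :: "'v::euclidean_space set"
  assumes "subspace S"
  obtains B where "finite B" "B \<subseteq> S" "\<And>b. b \<in> B \<Longrightarrow> norm b = 1"
    "\<And>x. x \<in> S \<Longrightarrow> (\<Sum>b\<in>B. (x \<bullet> b) *\<^sub>R b) = x"
proof -
  obtain B where B: "B \<subseteq> S" "pairwise orthogonal B" "\<And>x. x \<in> B \<Longrightarrow> norm x = 1"
    "independent B" "card B = dim S" "span B = S"
    using orthonormal_basis_subspace[OF assms] by metis
  then have "finite B" by (simp add: independent_imp_finite)
  show ?thesis
    apply (rule that[OF \<open>finite B\<close> B(1) B(3)])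
    using orthonormal_basis_expand[OF B(2) B(3) _ \<open>finite B\<close>] B(6) by auto
qed

lemma cores_upd:
  assumes "X \<in> cores K V" "k \<in> {1..K}" "x \<in> V k"
  shows "X(k := x) \<in> cores K V"
  using assms unfolding cores_def by auto

lemma ml_add:
  assumes "multilinear_on K V Phi" "X \<in> cores K V" "k \<in> {1..K}" "x \<in> V k" "y \<in> V k"
  shows "Phi (X(k := x + y)) = Phi (X(k := x)) + Phi (X(k := y))"
  using assms unfolding multilinear_on_def by blast

lemma ml_scale:
  assumes "multilinear_on K V Phi" "X \<in> cores K V" "k \<in> {1..K}" "x \<in> V k"
  shows "Phi (X(k := c *\<^sub>R x)) = c *\<^sub>R Phi (X(k := x))"
  using assms unfolding multilinear_on_def by blast

lemma ml_zero:
  assumes "multilinear_on K V Phi" "X \<in> cores K V" "k \<in> {1..K}" "subspace (V k)"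
  shows "Phi (X(k := 0)) = 0"
  using ml_scale[OF assms(1-3) subspace_0[OF assms(4)], of 0] by simp

lemma ml_diff:
  assumes "multilinear_on K V Phi" "X \<in> cores K V" "k \<in> {1..K}" "x \<in> V k" "y \<in> V k" "subspace (V k)"
  shows "Phi (X(k := x - y)) = Phi (X(k := x)) - Phi (X(k := y))"
proof -
  have "x - y \<in> V k" using assms subspace_diff by blast
  then have "Phi (X(k := (x - y) + y)) = Phi (X(k := x - y)) + Phi (X(k := y))"
    using ml_add[OF assms(1-3)] assms by blast
  then show ?thesis by simp
qed

lemma ml_sum:
  assumes "multilinear_on K V Phi" "X \<in> cores K V" "k \<in> {1..K}" "subspace (V k)"
    "finite B" "B \<subseteq> V k"
  shows "Phi (X(k := \<Sum>b\<in>B. c b *\<^sub>R b)) = (\<Sum>b\<in>B. c b *\<^sub>R Phi (X(k := b)))"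
  using assms(5,6)
proof (induction B rule: finite_induct)
  case empty
  then show ?case using ml_zero[OF assms(1-4)] by (simp only: sum.empty)
next
  case (insert x F)
  have s: "(\<Sum>b\<in>F. c b *\<^sub>R b) \<in> V k"
    using insert assms(4) by (auto intro!: subspace_sum subspace_scale)
  have x: "c x *\<^sub>R x \<in> V k" using insert assms(4) by (auto intro!: subspace_scale)
  have "Phi (X(k := \<Sum>b\<in>insert x F. c b *\<^sub>R b)) = Phi (X(k := c x *\<^sub>R x + (\<Sum>b\<in>F. c b *\<^sub>R b)))"
    using insert by simp
  also have "\<dots> = Phi (X(k := c x *\<^sub>R x)) + Phi (X(k := (\<Sum>b\<in>F. c b *\<^sub>R b)))"
    by (rule ml_add[OF assms(1-3) x s])
  also have "\<dots> = c x *\<^sub>R Phi (X(k := x)) + (\<Sum>b\<in>F. c b *\<^sub>R Phi (X(k := b)))"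
    using insert.IH insert.prems ml_scale[OF assms(1-3), of x "c x"] by (simp add: fun_upd_def)
  finally show ?case using insert.hyps by (simp only: sum.insert[OF insert.hyps(1,2)])
qed

lemma bases_exist:
  fixes V :: "nat \<Rightarrow> 'v::euclidean_space set"
  assumes sub: "\<forall>k\<in>{1..K}. subspace (V k)"
  obtains B where "\<And>k. k \<in> {1..K} \<Longrightarrow> finite (B k) \<and> B k \<subseteq> V k \<and> (\<forall>b\<in>B k. norm b = 1)
      \<and> (\<forall>x\<in>V k. (\<Sum>b\<in>B k. (x \<bullet> b) *\<^sub>R b) = x)"
proof -
  have "\<forall>k\<in>{1..K}. \<exists>Bk. finite Bk \<and> Bk \<subseteq> V k \<and> (\<forall>b\<in>Bk. norm b = 1)
      \<and> (\<forall>x\<in>V k. (\<Sum>b\<in>Bk. (x \<bullet> b) *\<^sub>R b) = x)"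
  proof
    fix k assume "k \<in> {1..K}"
    then have "subspace (V k)" using sub by blast
    from basis_exists[OF this] show "\<exists>Bk. finite Bk \<and> Bk \<subseteq> V k \<and> (\<forall>b\<in>Bk. norm b = 1)
      \<and> (\<forall>x\<in>V k. (\<Sum>b\<in>Bk. (x \<bullet> b) *\<^sub>R b) = x)" by metis
  qed
  then show ?thesis using that by metis
qed

lemma ml_bound:
  fixes V :: "nat \<Rightarrow> 'v::euclidean_space set" and Phi :: "(nat \<Rightarrow> 'v) \<Rightarrow> 'w::real_normed_vector"
  assumes ml: "multilinear_on K V Phi" and sub: "\<forall>k\<in>{1..K}. subspace (V k)"
  shows "\<exists>M\<ge>0. \<forall>X\<in>cores K V. norm (Phi X) \<le> M * (\<Prod>l\<in>{1..K}. norm (X l))"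
proof -
  obtain B where B: "\<And>k. k \<in> {1..K} \<Longrightarrow> finite (B k) \<and> B k \<subseteq> V k \<and> (\<forall>b\<in>B k. norm b = 1)
      \<and> (\<forall>x\<in>V k. (\<Sum>b\<in>B k. (x \<bullet> b) *\<^sub>R b) = x)"
    using bases_exist[OF sub] by metis
  have main: "\<exists>M\<ge>0. \<forall>X\<in>cores K V. (\<forall>l. m < l \<and> l \<le> K \<longrightarrow> X l \<in> B l) \<longrightarrow>
      norm (Phi X) \<le> M * (\<Prod>l\<in>{1..m}. norm (X l))" if "m \<le> K" for m
    using that
  proof (induction m)
    case 0
    define S0 where "S0 = {X\<in>cores K V. \<forall>l. 0 < l \<and> l \<le> K \<longrightarrow> X l \<in> B l}"
    have "S0 \<subseteq> (\<lambda>g l. if l \<in> {1..K} then g l else 0) ` (PiE {1..K} B)"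
    proof
      fix X assume X: "X \<in> S0"
      have "X = (\<lambda>l. if l \<in> {1..K} then restrict X {1..K} l else 0)"
        using X unfolding S0_def cores_def by auto
      moreover have "restrict X {1..K} \<in> PiE {1..K} B"
        using X unfolding S0_def by auto
      ultimately show "X \<in> (\<lambda>g l. if l \<in> {1..K} then g l else 0) ` (PiE {1..K} B)" by blast
    qed
    moreover have "finite (PiE {1..K} B)"
      by (rule finite_PiE) (use B in auto)
    ultimately have fin: "finite S0" by (meson finite_imageI finite_subset)
    show ?case
    proof (intro exI[of _ "\<Sum>X\<in>S0. norm (Phi X)"] conjI ballI impI)
      show "0 \<le> (\<Sum>X\<in>S0. norm (Phi X))" by (simp add: sum_nonneg)
      fix X assume "X \<in> cores K V" "\<forall>l. 0 < l \<and> l \<le> K \<longrightarrow> X l \<in> B l"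
      then have "X \<in> S0" unfolding S0_def by auto
      then have "norm (Phi X) \<le> (\<Sum>X\<in>S0. norm (Phi X))"
        by (intro member_le_sum fin) auto
      then show "norm (Phi X) \<le> (\<Sum>X\<in>S0. norm (Phi X)) * (\<Prod>l\<in>{1..0}. norm (X l))" by simp
    qed
  next
    case (Suc m)
    then obtain M where M0: "M \<ge> 0" and M: "\<And>X. X\<in>cores K V \<Longrightarrow> (\<forall>l. m < l \<and> l \<le> K \<longrightarrow> X l \<in> B l) \<Longrightarrow>
      norm (Phi X) \<le> M * (\<Prod>l\<in>{1..m}. norm (X l))" by auto
    define k where "k = Suc m"
    have k: "k \<in> {1..K}" using Suc k_def by auto
    note Bk = B[OF k]
    show ?case
    proof (intro exI[of _ "real (card (B k)) * M"] conjI ballI impI)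
      show "0 \<le> real (card (B k)) * M" using M0 by simp
      fix X assume X: "X \<in> cores K V" and XB: "\<forall>l. Suc m < l \<and> l \<le> K \<longrightarrow> X l \<in> B l"
      define x where "x = X k"
      have xV: "x \<in> V k" using X k unfolding cores_def x_def by auto
      have "Phi X = Phi (X(k := \<Sum>b\<in>B k. (x \<bullet> b) *\<^sub>R b))"
        using Bk xV x_def by simp
      also have "\<dots> = (\<Sum>b\<in>B k. (x \<bullet> b) *\<^sub>R Phi (X(k := b)))"
        by (rule ml_sum[OF ml X k]) (use sub k Bk in auto)
      finally have eq: "Phi X = (\<Sum>b\<in>B k. (x \<bullet> b) *\<^sub>R Phi (X(k := b)))" .
      define P where "P = (\<Prod>l\<in>{1..m}. norm (X l))"
      have P0: "P \<ge> 0" unfolding P_def by (simp add: prod_nonneg)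
      have each: "norm ((x \<bullet> b) *\<^sub>R Phi (X(k := b))) \<le> norm x * (M * P)" if b: "b \<in> B k" for b
      proof -
        have Xb: "X(k := b) \<in> cores K V" using cores_upd[OF X k] Bk b by auto
        have "norm (Phi (X(k := b))) \<le> M * (\<Prod>l\<in>{1..m}. norm ((X(k := b)) l))"
          apply (rule M[OF Xb]) using XB Bk b k_def by auto
        also have "(\<Prod>l\<in>{1..m}. norm ((X(k := b)) l)) = P"
          unfolding P_def k_def by (rule prod.cong) auto
        finally have n1: "norm (Phi (X(k := b))) \<le> M * P" .
        have n2: "\<bar>x \<bullet> b\<bar> \<le> norm x" using Cauchy_Schwarz_ineq2[of x b] Bk b by auto
        show ?thesis
          using mult_mono[OF n2 n1] M0 P0 by simp
      qed
      have "norm (Phi X) \<le> (\<Sum>b\<in>B k. norm ((x \<bullet> b) *\<^sub>R Phi (X(k := b))))"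
        unfolding eq by (rule norm_sum)
      also have "\<dots> \<le> (\<Sum>b\<in>B k. norm x * (M * P))"
        by (rule sum_mono) (use each in auto)
      also have "\<dots> = real (card (B k)) * M * (\<Prod>l\<in>{1..Suc m}. norm (X l))"
        unfolding P_def k_def x_def by (simp add: prod.nat_ivl_Suc')
      finally show "norm (Phi X) \<le> real (card (B k)) * M * (\<Prod>l\<in>{1..Suc m}. norm (X l))" .
    qed
  qed
  from main[of K] show ?thesis by (metis leD order_refl)
qed

lemma ml_bound_r:
  fixes Phi :: "(nat \<Rightarrow> 'v::real_normed_vector) \<Rightarrow> 'w::real_normed_vector"
  assumes M: "\<forall>X\<in>cores K V. norm (Phi X) \<le> M * (\<Prod>l\<in>{1..K}. norm (X l))" and M0: "M \<ge> 0"
    and X: "X \<in> cores K V" and k: "k \<in> {1..K}" and r: "r \<ge> 1"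
    and Xr: "\<forall>l\<in>{1..K}. l \<noteq> k \<longrightarrow> norm (X l) \<le> r"
  shows "norm (Phi X) \<le> M * r ^ K * norm (X k)"
proof -
  have "(\<Prod>l\<in>{1..K}. norm (X l)) = norm (X k) * (\<Prod>l\<in>{1..K} - {k}. norm (X l))"
    using k by (simp add: prod.remove)
  also have "(\<Prod>l\<in>{1..K} - {k}. norm (X l)) \<le> (\<Prod>l\<in>{1..K} - {k}. r)"
    by (rule prod_mono) (use Xr in auto)
  also have "(\<Prod>l\<in>{1..K} - {k}. r) = r ^ (K - 1)"
    using k by (simp add: card_Diff_singleton)
  also have "r ^ (K - 1) \<le> r ^ K" using r by (simp add: power_increasing)
  finally have "(\<Prod>l\<in>{1..K}. norm (X l)) \<le> norm (X k) * r ^ K"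
    by (simp add: mult_left_mono)
  then show ?thesis using M X M0
    by (metis (no_types, lifting) mult.assoc mult.commute mult_left_mono order_trans)
qed

lemma ml_lip:
  fixes V :: "nat \<Rightarrow> 'v::euclidean_space set" and Phi :: "(nat \<Rightarrow> 'v) \<Rightarrow> 'w::real_normed_vector"
  assumes ml: "multilinear_on K V Phi" and sub: "\<forall>k\<in>{1..K}. subspace (V k)"
    and M: "\<forall>X\<in>cores K V. norm (Phi X) \<le> M * (\<Prod>l\<in>{1..K}. norm (X l))" and M0: "M \<ge> 0"
    and X: "X \<in> cores K V" and Y: "Y \<in> cores K V" and r: "r \<ge> 1"
    and b: "\<forall>l\<in>{1..K}. norm (X l) \<le> r \<and> norm (Y l) \<le> r \<and> norm (X l - Y l) \<le> \<delta>"
  shows "norm (Phi X - Phi Y) \<le> real K * (M * r ^ K * \<delta>)"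
proof -
  define Z where "Z = (\<lambda>m l. if l \<le> m then X l else Y l)"
  have Zc: "Z m \<in> cores K V" for m
    using X Y unfolding cores_def Z_def by auto
  have Z0: "Z 0 = Y"
    using X Y unfolding cores_def Z_def by (auto simp: fun_eq_iff)
  have ZK: "Z K = X"
    using X Y unfolding cores_def Z_def by (auto simp: fun_eq_iff)
  have step: "norm (Phi (Z (Suc n)) - Phi (Z n)) \<le> M * r ^ K * \<delta>" if n: "n < K" for n
  proof -
    have k: "Suc n \<in> {1..K}" using n by auto
    have XV: "X (Suc n) \<in> V (Suc n)" and YV: "Y (Suc n) \<in> V (Suc n)"
      using X Y k unfolding cores_def by auto
    have e1: "Z (Suc n) = (Z n)(Suc n := X (Suc n))" unfolding Z_def by (auto simp: fun_eq_iff)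
    have e2: "Z n = (Z n)(Suc n := Y (Suc n))" unfolding Z_def by (auto simp: fun_eq_iff)
    have "Phi (Z (Suc n)) - Phi (Z n) = Phi ((Z n)(Suc n := X (Suc n) - Y (Suc n)))"
      using ml_diff[OF ml Zc k XV YV] sub k e1 e2 by metis
    also have "norm \<dots> \<le> M * r ^ K * norm (((Z n)(Suc n := X (Suc n) - Y (Suc n))) (Suc n))"
      apply (rule ml_bound_r[OF M M0 _ k r])
      using cores_upd[OF Zc k] subspace_diff[OF _ XV YV] sub k apply blast
      using b unfolding Z_def by auto
    also have "\<dots> \<le> M * r ^ K * \<delta>"
      using b k M0 r by (auto intro!: mult_left_mono)
    finally show ?thesis .
  qed
  have "Phi X - Phi Y = (\<Sum>n<K. Phi (Z (Suc n)) - Phi (Z n))"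
    using sum_lessThan_telescope[of "\<lambda>n. Phi (Z n)" K] Z0 ZK by simp
  then have "norm (Phi X - Phi Y) \<le> (\<Sum>n<K. norm (Phi (Z (Suc n)) - Phi (Z n)))"
    by (simp add: norm_sum)
  also have "\<dots> \<le> (\<Sum>n<K. M * r ^ K * \<delta>)"
    by (rule sum_mono) (use step in auto)
  finally show ?thesis by simp
qed

lemma pgrad_char:
  fixes V :: "nat \<Rightarrow> 'v::euclidean_space set" and Phi :: "(nat \<Rightarrow> 'v) \<Rightarrow> 'w::euclidean_space"
    and f :: "'w \<Rightarrow> real"
  assumes ml: "multilinear_on K V Phi" and sub: "\<forall>k\<in>{1..K}. subspace (V k)"
    and fd: "\<forall>x. (f has_derivative (\<lambda>h. df x \<bullet> h)) (at x)"
    and G: "G \<in> cores K V" and k: "k \<in> {1..K}"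
  shows "pgrad (f \<circ> Phi) V G k \<in> V k \<and>
    (\<forall>h\<in>V k. pgrad (f \<circ> Phi) V G k \<bullet> h = df (Phi G) \<bullet> Phi (G(k := h)))"
proof -
  have subk: "subspace (V k)" using sub k by blast
  obtain B where B: "finite B" "B \<subseteq> V k" "\<And>b. b \<in> B \<Longrightarrow> norm b = 1"
    "\<And>x. x \<in> V k \<Longrightarrow> (\<Sum>b\<in>B. (x \<bullet> b) *\<^sub>R b) = x"
    using basis_exists[OF subk] by metis
  define l where "l h = df (Phi G) \<bullet> Phi (G(k := h))" for h
  define g where "g = (\<Sum>b\<in>B. l b *\<^sub>R b)"
  define A where "A h = (\<Sum>b\<in>B. (h \<bullet> b) *\<^sub>R Phi (G(k := b)))" for h
  have gV: "g \<in> V k" unfolding g_def using B subk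
    by (auto intro!: subspace_sum subspace_scale)
  have AV: "Phi (G(k := h)) = A h" if "h \<in> V k" for h
  proof -
    have "Phi (G(k := h)) = Phi (G(k := \<Sum>b\<in>B. (h \<bullet> b) *\<^sub>R b))" using B(4)[OF that] by simp
    also have "\<dots> = A h" unfolding A_def by (rule ml_sum[OF ml G k subk B(1,2)])
    finally show ?thesis .
  qed
  have gA: "g \<bullet> h = df (Phi G) \<bullet> A h" for h
    unfolding g_def A_def l_def by (simp add: inner_sum_left inner_sum_right inner_commute mult.commute)
  have linA: "bounded_linear A"
    unfolding A_def by (intro bounded_linear_sum) (rule bounded_linear_compose[OF bounded_linear_scaleR_left bounded_linear_inner_left])
  have A0: "A 0 = 0" unfolding A_def by simp
  have dA: "((\<lambda>h. Phi G + A h) has_derivative A) (at 0 within V k)"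
    using has_derivative_add[OF has_derivative_const[of "Phi G"] bounded_linear_imp_has_derivative[OF linA]]
    by simp
  have d1: "((\<lambda>h. f (Phi G + A h)) has_derivative (\<lambda>h. df (Phi G) \<bullet> A h)) (at 0 within V k)"
    using has_derivative_compose[OF dA, of f "\<lambda>h. df (Phi G) \<bullet> h"] fd A0 by simp
  have P: "((\<lambda>h. (f \<circ> Phi) (G(k := G k + h))) has_derivative (\<lambda>h. g \<bullet> h)) (at 0 within V k)"
  proof (rule has_derivative_transform_within[OF _ zero_less_one subspace_0[OF subk]])
    show "((\<lambda>h. f (Phi G + A h)) has_derivative (\<lambda>h. g \<bullet> h)) (at 0 within V k)"
      using d1 gA by simp
    fix h assume h: "h \<in> V k"
    have GkV: "G k \<in> V k" using G k unfolding cores_def by auto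
    have "Phi (G(k := G k + h)) = Phi (G(k := G k)) + Phi (G(k := h))"
      by (rule ml_add[OF ml G k GkV h])
    then show "f (Phi G + A h) = (f \<circ> Phi) (G(k := G k + h))" using AV[OF h] by simp
  qed
  have uniq: "g' = g" if g'V: "g' \<in> V k" and
    P': "((\<lambda>h. (f \<circ> Phi) (G(k := G k + h))) has_derivative (\<lambda>h. g' \<bullet> h)) (at 0 within V k)" for g'
  proof -
    have eqh: "g' \<bullet> h = g \<bullet> h" if h: "h \<in> V k" for h
    proof -
      have sd: "((\<lambda>s::real. s *\<^sub>R h) has_derivative (\<lambda>s. s *\<^sub>R h)) (at 0)"
        by (intro derivative_eq_intros) auto
      have img: "(\<lambda>s::real. s *\<^sub>R h) ` UNIV \<subseteq> V k" using subk h by (auto intro: subspace_scale)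
      have c1: "((\<lambda>s. (f \<circ> Phi) (G(k := G k + s *\<^sub>R h))) has_derivative (\<lambda>s. g' \<bullet> (s *\<^sub>R h))) (at 0)"
        proof -
        have P1: "((\<lambda>h. (f \<circ> Phi) (G(k := G k + h))) has_derivative (\<lambda>h. g' \<bullet> h))
           (at ((\<lambda>s::real. s *\<^sub>R h) 0) within range (\<lambda>s::real. s *\<^sub>R h))"
          using has_derivative_subset[OF P' img] by simp
        show ?thesis using has_derivative_in_compose[OF sd P1] by simp
      qed
      have c2: "((\<lambda>s. (f \<circ> Phi) (G(k := G k + s *\<^sub>R h))) has_derivative (\<lambda>s. g \<bullet> (s *\<^sub>R h))) (at 0)"
        proof -
        have P1: "((\<lambda>h. (f \<circ> Phi) (G(k := G k + h))) has_derivative (\<lambda>h. g \<bullet> h))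
           (at ((\<lambda>s::real. s *\<^sub>R h) 0) within range (\<lambda>s::real. s *\<^sub>R h))"
          using has_derivative_subset[OF P img] by simp
        show ?thesis using has_derivative_in_compose[OF sd P1] by simp
      qed
      from has_derivative_unique[OF c1 c2] have "(\<lambda>s. g' \<bullet> (s *\<^sub>R h)) = (\<lambda>s. g \<bullet> (s *\<^sub>R h))" .
      from fun_cong[OF this, of 1] show ?thesis by simp
    qed
    have "g' - g \<in> V k" using g'V gV subk subspace_diff by blast
    from eqh[OF this] have "(g' - g) \<bullet> (g' - g) = 0" by (simp add: inner_diff_left)
    then show ?thesis by simp
  qed
  have "pgrad (f \<circ> Phi) V G k = g"
    unfolding pgrad_def
  proof (rule the_equality)
    show "g \<in> V k \<and> ((\<lambda>h. (f \<circ> Phi) (G(k := G k + h))) has_derivative (\<lambda>h. g \<bullet> h)) (at 0 within V k)"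
      using gV P by blast
  next
    fix g' assume "g' \<in> V k \<and> ((\<lambda>h. (f \<circ> Phi) (G(k := G k + h))) has_derivative (\<lambda>h. g' \<bullet> h)) (at 0 within V k)"
    then show "g' = g" using uniq by blast
  qed
  then show ?thesis using gV gA AV l_def by simp
qed


lemma norm_sq_deriv:
  fixes x :: "real \<Rightarrow> 'a::real_inner"
  assumes d: "(x has_vector_derivative v) (at t)"
  shows "((\<lambda>s. (norm (x s))\<^sup>2) has_real_derivative 2 * (x t \<bullet> v)) (at t)"
proof -
  have d': "(x has_derivative (\<lambda>h. h *\<^sub>R v)) (at t)" using d unfolding has_vector_derivative_def .
  have "((\<lambda>s. x s \<bullet> x s) has_derivative (\<lambda>h. x t \<bullet> (h *\<^sub>R v) + (h *\<^sub>R v) \<bullet> x t)) (at t)"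
    by (rule has_derivative_inner[OF d' d'])
  moreover have "(\<lambda>s. x s \<bullet> x s) = (\<lambda>s. (norm (x s))\<^sup>2)" by (simp add: power2_norm_eq_inner)
  moreover have "(\<lambda>h. x t \<bullet> (h *\<^sub>R v) + (h *\<^sub>R v) \<bullet> x t) = (*) (2 * (x t \<bullet> v))"
    by (auto simp: fun_eq_iff inner_commute algebra_simps)
  ultimately show ?thesis unfolding has_field_derivative_def by simp
qed

theorem theorem2:
  fixes K :: nat
    and V :: "nat \<Rightarrow> ('v::euclidean_space) set"
    and \<Phi> :: "(nat \<Rightarrow> 'v) \<Rightarrow> 'w::euclidean_space"
  assumes "K \<ge> 2"
    and "\<forall>k\<in>{1..K}. subspace (V k)"
    and "multilinear_on K V \<Phi>"
  shows "\<exists>C :: real \<Rightarrow> (nat \<Rightarrow> real) \<Rightarrow> real \<Rightarrow> real.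
    \<forall>(L::real) (f::'w \<Rightarrow> real) (df::'w \<Rightarrow> 'w) (G::nat \<Rightarrow> 'v) (\<gamma>::real \<Rightarrow> nat \<Rightarrow> 'v)
      (t0::real) (\<rho>::real) (i::nat) (j::nat).
      (\<forall>x. (f has_derivative (\<lambda>h. df x \<bullet> h)) (at x)) \<and>
      (\<forall>x y. norm (df x - df y) \<le> L * norm (x - y)) \<and>
      G \<in> cores K V \<and>
      (\<exists>k\<in>{1..K}. sam_grads (f \<circ> \<Phi>) V K G k \<noteq> 0) \<and>
      0 < \<rho> \<and> \<rho> \<le> 1 \<and>
      i \<in> {1..K} \<and> j \<in> {1..K} \<and> i \<noteq> j \<and>
      \<gamma> t0 = G \<and>
      (\<forall>k\<in>{1..K}. ((\<lambda>t. \<gamma> t k) has_vector_derivative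
                       - sam_tgrads (f \<circ> \<Phi>) V K \<rho> G k) (at t0))
      \<longrightarrow>
      (\<exists>R. ((\<lambda>t. (norm (\<gamma> t i))\<^sup>2 - (norm (\<gamma> t j))\<^sup>2) has_real_derivative
              2 * \<rho> * sam_u (f \<circ> \<Phi>) V K G *
                ((norm (sam_grads (f \<circ> \<Phi>) V K G i))\<^sup>2 - (norm (sam_grads (f \<circ> \<Phi>) V K G j))\<^sup>2)
              + R) (at t0) \<and>
           \<bar>R\<bar> \<le> C L (\<lambda>k. norm (G k)) (norm (df (\<Phi> G))) * \<rho>\<^sup>2)"

proof -
  note ml = assms(3) and sub = assms(2)
  obtain M where M0: "M \<ge> 0" and M: "\<forall>X\<in>cores K V. norm (\<Phi> X) \<le> M * (\<Prod>l\<in>{1..K}. norm (X l))"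
    using ml_bound[OF ml sub] by blast
  define C where "C = (\<lambda>(L::real) (n::nat\<Rightarrow>real) (D::real).
     4 * (real K * (M * (1 + (\<Sum>l=1..K. n l)) ^ K)) * (\<bar>L\<bar> * (M * (1 + (\<Sum>l=1..K. n l)) ^ K) + D))"
  show ?thesis
  proof (rule exI[of _ C], intro allI impI)
    fix L f df G \<gamma> t0 \<rho> i j
    assume H: "(\<forall>x. (f has_derivative (\<lambda>h. df x \<bullet> h)) (at x)) \<and>
      (\<forall>x y. norm (df x - df y) \<le> L * norm (x - y)) \<and>
      G \<in> cores K V \<and>
      (\<exists>k\<in>{1..K}. sam_grads (f \<circ> \<Phi>) V K G k \<noteq> 0) \<and>
      0 < \<rho> \<and> \<rho> \<le> 1 \<and>
      i \<in> {1..K} \<and> j \<in> {1..K} \<and> i \<noteq> j \<and>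
      \<gamma> t0 = G \<and>
      (\<forall>k\<in>{1..K}. ((\<lambda>t. \<gamma> t k) has_vector_derivative
                       - sam_tgrads (f \<circ> \<Phi>) V K \<rho> G k) (at t0))"
    from H have fd: "\<forall>x. (f has_derivative (\<lambda>h. df x \<bullet> h)) (at x)" by blast
    from H have Lip: "\<And>x y. norm (df x - df y) \<le> L * norm (x - y)" by blast
    from H have Gc: "G \<in> cores K V" by blast
    from H have nz: "\<exists>k\<in>{1..K}. sam_grads (f \<circ> \<Phi>) V K G k \<noteq> 0" by blast
    from H have r0: "0 < \<rho>" and r1: "\<rho> \<le> 1" by auto
    from H have i: "i \<in> {1..K}" and j: "j \<in> {1..K}" by auto
    from H have g0: "\<gamma> t0 = G" by blast
    from H have gd: "\<And>k. k \<in> {1..K} \<Longrightarrow> ((\<lambda>t. \<gamma> t k) has_vector_derivative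
                       - sam_tgrads (f \<circ> \<Phi>) V K \<rho> G k) (at t0)" by blast
    define F where "F = f \<circ> \<Phi>"
    define g where "g = sam_grads F V K G"
    define u where "u = sam_u F V K G"
    define Gt where "Gt = sam_perturb F V K \<rho> G"
    define gt where "gt = sam_tgrads F V K \<rho> G"
    define S where "S = (\<Sum>l=1..K. (norm (g l))\<^sup>2)"
    have u_eq: "u = 1 / sqrt S" unfolding u_def S_def g_def sam_u_def ..
    have gchar: "g k \<in> V k \<and> (\<forall>h\<in>V k. g k \<bullet> h = df (\<Phi> G) \<bullet> \<Phi> (G(k := h)))" if k: "k \<in> {1..K}" for k
      using pgrad_char[OF ml sub fd Gc k] k unfolding g_def sam_grads_def F_def by simp
    have gout: "g k = 0" if "k \<notin> {1..K}" for k using that unfolding g_def sam_grads_def by auto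
    obtain k0 where k0: "k0 \<in> {1..K}" "g k0 \<noteq> 0" using nz unfolding g_def F_def by blast
    have gleS: "(norm (g k))\<^sup>2 \<le> S" if "k \<in> {1..K}" for k
      unfolding S_def by (rule member_le_sum) (use that in auto)
    have Spos: "S > 0" using gleS[OF k0(1)] k0(2)
      by (metis norm_eq_zero order_less_le_trans power_not_zero zero_less_power2)
    have upos: "u > 0" using Spos u_eq by simp
    have ug: "u * norm (g k) \<le> 1" if k: "k \<in> {1..K}" for k
    proof -
      have "norm (g k) \<le> sqrt S" using gleS[OF k] by (simp add: real_le_rsqrt)
      then have "u * norm (g k) \<le> u * sqrt S" using upos by (simp add: mult_left_mono)
      also have "u * sqrt S = 1" using Spos u_eq by simp
      finally show ?thesis .
    qed
    have Gt_eq: "Gt k = G k + (\<rho> * u) *\<^sub>R g k" for k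
      unfolding Gt_def sam_perturb_def u_def g_def ..
    have GV: "G k \<in> V k" if "k \<in> {1..K}" for k using Gc that unfolding cores_def by auto
    have Gtc: "Gt \<in> cores K V"
      using Gc gchar gout sub unfolding cores_def Gt_eq
      by (auto intro!: subspace_add subspace_scale)
    have gt_eq: "gt = sam_grads F V K Gt" unfolding gt_def Gt_def sam_tgrads_def ..
    have gtchar: "gt k \<in> V k \<and> (\<forall>h\<in>V k. gt k \<bullet> h = df (\<Phi> Gt) \<bullet> \<Phi> (Gt(k := h)))" if k: "k \<in> {1..K}" for k
      using pgrad_char[OF ml sub fd Gtc k] k unfolding gt_eq sam_grads_def F_def by simp
    have euler: "Gt k \<bullet> gt k = df (\<Phi> Gt) \<bullet> \<Phi> Gt" if k: "k \<in> {1..K}" for k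
    proof -
      have "Gt k \<in> V k" using Gtc k unfolding cores_def by auto
      then have "gt k \<bullet> Gt k = df (\<Phi> Gt) \<bullet> \<Phi> (Gt(k := Gt k))" using gtchar[OF k] by blast
      then show ?thesis by (simp add: inner_commute)
    qed
    have Gg: "G k \<bullet> gt k = df (\<Phi> Gt) \<bullet> \<Phi> Gt - (\<rho> * u) * (g k \<bullet> gt k)" if k: "k \<in> {1..K}" for k
    proof -
      have "G k = Gt k - (\<rho> * u) *\<^sub>R g k" using Gt_eq by simp
      then have "G k \<bullet> gt k = Gt k \<bullet> gt k - (\<rho> * u) * (g k \<bullet> gt k)" by (simp add: inner_diff_left)
      then show ?thesis using euler[OF k] by simp
    qed
    define D where "D = 2 * (G i \<bullet> (- gt i)) - 2 * (G j \<bullet> (- gt j))"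
    have dn: "((\<lambda>t. (norm (\<gamma> t k))\<^sup>2) has_real_derivative 2 * (G k \<bullet> (- gt k))) (at t0)" if k: "k \<in> {1..K}" for k
      using norm_sq_deriv[OF gd[OF k]] g0 unfolding gt_def F_def by simp
    have dD: "((\<lambda>t. (norm (\<gamma> t i))\<^sup>2 - (norm (\<gamma> t j))\<^sup>2) has_real_derivative D) (at t0)"
      unfolding D_def by (rule DERIV_diff[OF dn[OF i] dn[OF j]])
    define R where "R = D - 2 * \<rho> * u * ((norm (g i))\<^sup>2 - (norm (g j))\<^sup>2)"
    have R_eq: "R = 2 * \<rho> * u * ((g i \<bullet> (gt i - g i)) - (g j \<bullet> (gt j - g j)))"
      unfolding R_def D_def using Gg[OF i] Gg[OF j]
      by (simp add: inner_diff_right power2_norm_eq_inner algebra_simps)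
    define r where "r = 1 + (\<Sum>l=1..K. norm (G l))"
    have r1': "r \<ge> 1" unfolding r_def by (simp add: sum_nonneg)
    have Gr: "norm (G l) \<le> r - 1" if "l \<in> {1..K}" for l
      unfolding r_def by simp (rule member_le_sum, use that in auto)
    have Gdiff: "norm (Gt l - G l) \<le> \<rho>" if l: "l \<in> {1..K}" for l
    proof -
      have "norm (Gt l - G l) = \<rho> * (u * norm (g l))" using Gt_eq r0 upos by simp
      also have "\<dots> \<le> \<rho> * 1" using ug[OF l] r0 by (intro mult_left_mono) auto
      finally show ?thesis by simp
    qed
    have Gtr: "norm (Gt l) \<le> r" if l: "l \<in> {1..K}" for l
    proof -
      have "norm (Gt l) \<le> norm (G l) + norm (Gt l - G l)" by (metis norm_triangle_sub add.commute)
      then show ?thesis using Gr[OF l] Gdiff[OF l] r1 by linarith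
    qed
    define Mr where "Mr = M * r ^ K"
    have Mr0: "Mr \<ge> 0" unfolding Mr_def using M0 r1' by simp
    define C0 where "C0 = real K * Mr * (\<bar>L\<bar> * Mr + norm (df (\<Phi> G)))"
    have key: "norm (gt k - g k) \<le> C0 * \<rho>" if k: "k \<in> {1..K}" for k
    proof -
      define d where "d = gt k - g k"
      have dV: "d \<in> V k" unfolding d_def using gtchar[OF k] gchar[OF k] sub k subspace_diff by blast
      define e where "e = (1 / norm d) *\<^sub>R d"
      have eV: "e \<in> V k" unfolding e_def using dV sub k subspace_scale by blast
      have ne: "norm e \<le> 1" unfolding e_def by simp
      have nd: "norm d = d \<bullet> e"
        unfolding e_def by (cases "d = 0") (simp_all add: power2_norm_eq_inner[symmetric] power2_eq_square)
      have "d \<bullet> e = gt k \<bullet> e - g k \<bullet> e" unfolding d_def by (simp add: inner_diff_left)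
      also have "\<dots> = df (\<Phi> Gt) \<bullet> \<Phi> (Gt(k := e)) - df (\<Phi> G) \<bullet> \<Phi> (G(k := e))"
        using gtchar[OF k] gchar[OF k] eV by simp
      also have "\<dots> = (df (\<Phi> Gt) - df (\<Phi> G)) \<bullet> \<Phi> (Gt(k := e)) + df (\<Phi> G) \<bullet> (\<Phi> (Gt(k := e)) - \<Phi> (G(k := e)))"
        by (simp add: inner_diff_left inner_diff_right)
      also have "\<dots> \<le> norm (df (\<Phi> Gt) - df (\<Phi> G)) * norm (\<Phi> (Gt(k := e))) + norm (df (\<Phi> G)) * norm (\<Phi> (Gt(k := e)) - \<Phi> (G(k := e)))"
        by (intro add_mono Cauchy_Schwarz_ineq2[THEN abs_le_D1])
      also have "\<dots> \<le> (\<bar>L\<bar> * (real K * (Mr * \<rho>))) * Mr + norm (df (\<Phi> G)) * (real K * (Mr * \<rho>))"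
      proof (intro add_mono mult_mono)
        have "norm (\<Phi> Gt - \<Phi> G) \<le> real K * (M * r ^ K * \<rho>)"
          by (rule ml_lip[OF ml sub M M0 Gtc Gc r1']) (use Gtr Gr Gdiff in force)
        then have "norm (\<Phi> Gt - \<Phi> G) \<le> real K * (Mr * \<rho>)" unfolding Mr_def by simp
        moreover have "norm (df (\<Phi> Gt) - df (\<Phi> G)) \<le> \<bar>L\<bar> * norm (\<Phi> Gt - \<Phi> G)"
          using Lip[of "\<Phi> Gt" "\<Phi> G"] by (smt (verit) mult_right_mono norm_ge_zero abs_ge_self)
        ultimately show "norm (df (\<Phi> Gt) - df (\<Phi> G)) \<le> \<bar>L\<bar> * (real K * (Mr * \<rho>))"
          by (smt (verit) abs_ge_zero mult_left_mono)
        have "norm (\<Phi> (Gt(k := e))) \<le> M * r ^ K * norm ((Gt(k := e)) k)"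
          by (rule ml_bound_r[OF M M0 cores_upd[OF Gtc k eV] k r1']) (use Gtr in auto)
        then show "norm (\<Phi> (Gt(k := e))) \<le> Mr"
          unfolding Mr_def using ne M0 r1'
          by (smt (verit) fun_upd_same mult_left_le mult_nonneg_nonneg norm_ge_zero zero_le_power)
        show "norm (\<Phi> (Gt(k := e)) - \<Phi> (G(k := e))) \<le> real K * (Mr * \<rho>)"
          unfolding Mr_def
          by (rule ml_lip[OF ml sub M M0 cores_upd[OF Gtc k eV] cores_upd[OF Gc k eV] r1'])
             (use Gtr Gr Gdiff ne r1' r0 in force)
      qed (use Mr0 r0 in auto)
      also have "\<dots> = C0 * \<rho>" unfolding C0_def by (simp add: algebra_simps)
      finally show ?thesis using nd d_def by simp
    qed
    have trm: "\<bar>u * (g k \<bullet> (gt k - g k))\<bar> \<le> C0 * \<rho>" if k: "k \<in> {1..K}" for k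
    proof -
      have "\<bar>u * (g k \<bullet> (gt k - g k))\<bar> \<le> u * (norm (g k) * norm (gt k - g k))"
        using upos Cauchy_Schwarz_ineq2 by (simp add: abs_mult mult_left_mono)
      also have "\<dots> = (u * norm (g k)) * norm (gt k - g k)" by simp
      also have "\<dots> \<le> 1 * (C0 * \<rho>)"
        by (rule mult_mono[OF ug[OF k] key[OF k]]) auto
      finally show ?thesis by simp
    qed
    have Rb: "\<bar>R\<bar> \<le> 4 * C0 * \<rho>\<^sup>2"
    proof -
      have "\<bar>R\<bar> = 2 * \<rho> * \<bar>u * (g i \<bullet> (gt i - g i)) - u * (g j \<bullet> (gt j - g j))\<bar>"
      proof -
        have "R = (2 * \<rho>) * (u * (g i \<bullet> (gt i - g i)) - u * (g j \<bullet> (gt j - g j)))"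
          unfolding R_eq by (simp add: algebra_simps)
        then show ?thesis using r0 by (simp only: abs_mult)
      qed
      also have "\<dots> \<le> 2 * \<rho> * (C0 * \<rho> + C0 * \<rho>)"
        using trm[OF i] trm[OF j] r0 by (intro mult_left_mono) auto
      finally show ?thesis by (simp add: power2_eq_square algebra_simps)
    qed
    have CC: "C L (\<lambda>k. norm (G k)) (norm (df (\<Phi> G))) = 4 * C0"
      unfolding C_def C0_def Mr_def r_def by simp
    show "\<exists>R. ((\<lambda>t. (norm (\<gamma> t i))\<^sup>2 - (norm (\<gamma> t j))\<^sup>2) has_real_derivative
              2 * \<rho> * sam_u (f \<circ> \<Phi>) V K G *
                ((norm (sam_grads (f \<circ> \<Phi>) V K G i))\<^sup>2 - (norm (sam_grads (f \<circ> \<Phi>) V K G j))\<^sup>2)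
              + R) (at t0) \<and>
           \<bar>R\<bar> \<le> C L (\<lambda>k. norm (G k)) (norm (df (\<Phi> G))) * \<rho>\<^sup>2"
    proof (intro exI conjI)
      show "((\<lambda>t. (norm (\<gamma> t i))\<^sup>2 - (norm (\<gamma> t j))\<^sup>2) has_real_derivative
              2 * \<rho> * sam_u (f \<circ> \<Phi>) V K G *
                ((norm (sam_grads (f \<circ> \<Phi>) V K G i))\<^sup>2 - (norm (sam_grads (f \<circ> \<Phi>) V K G j))\<^sup>2)
              + R) (at t0)"
        using dD unfolding R_def u_def g_def F_def by simp
      show "\<bar>R\<bar> \<le> C L (\<lambda>k. norm (G k)) (norm (df (\<Phi> G))) * \<rho>\<^sup>2"
        using Rb CC by simp
    qed
  qed
qed

end
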